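(* The map $R:\mathbb{CP}^2\dashrightarrow\mathbb{CP}^2$ is algebraically stable.
   Context: $R[U:V:W]=[(U^2+V^2)^2:V^2(U+W)^2:(V^2+W^2)^2]$, a rational map of $\mathbb{CP}^2$ with indeterminacy points $[\pm i:1:\mp i]$. A rational map $R:\mathbb{CP}^2\dashrightarrow\mathbb{CP}^2$ is algebraically stable if there is no integer $n\ge0$ and no algebraic curve $V$ collapsed by $R$ (to a point) such that $R^n(V)$ is contained in the indeterminacy set of $R$; equivalently $\deg R^n=(\deg R)^n$ for all $n$, where $\deg$ is the degree of the reduced homogeneous lift. *)

theory Defs
  imports "HOL-Computational_Algebra.Polynomial"
begin

text \<open>Trivariate polynomials over the complex numbers, represented as nested
univariate polynomials: C[U][V][W]. The innermost variable is U, the middle V,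
the outermost W.\<close>

type_synonym poly3 = "complex poly poly poly"

definition varU :: poly3 where "varU = [:[:[:0, 1:]:]:]"
definition varV :: poly3 where "varV = [:[:0, 1:]:]"
definition varW :: poly3 where "varW = [:0, 1:]"
definition const3 :: "complex \<Rightarrow> poly3" where "const3 c = [:[:[:c:]:]:]"

definition coeff3 :: "poly3 \<Rightarrow> nat \<Rightarrow> nat \<Rightarrow> nat \<Rightarrow> complex" where
  "coeff3 P i j k = coeff (coeff (coeff P k) j) i"

definition homogeneous3 :: "nat \<Rightarrow> poly3 \<Rightarrow> bool" where
  "homogeneous3 d P \<longleftrightarrow> (\<forall>i j k. coeff3 P i j k \<noteq> 0 \<longrightarrow> i + j + k = d)"

definition subst3 :: "poly3 \<Rightarrow> poly3 \<times> poly3 \<times> poly3 \<Rightarrow> poly3" where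
  "subst3 P G = (case G of (A, B, C) \<Rightarrow>
     poly (map_poly (\<lambda>q. poly (map_poly (\<lambda>r. poly (map_poly const3 r) A) q) B) P) C)"

type_synonym lift3 = "poly3 \<times> poly3 \<times> poly3"

definition comp_lift :: "lift3 \<Rightarrow> lift3 \<Rightarrow> lift3" where
  "comp_lift F G = (case F of (F1, F2, F3) \<Rightarrow> (subst3 F1 G, subst3 F2 G, subst3 F3 G))"

primrec iter_lift :: "lift3 \<Rightarrow> nat \<Rightarrow> lift3" where
  "iter_lift F 0 = (varU, varV, varW)"
| "iter_lift F (Suc n) = comp_lift F (iter_lift F n)"

definition nonzero_lift :: "lift3 \<Rightarrow> bool" where
  "nonzero_lift F = (case F of (F1, F2, F3) \<Rightarrow> F1 \<noteq> 0 \<or> F2 \<noteq> 0 \<or> F3 \<noteq> 0)"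

definition homogeneous_lift :: "nat \<Rightarrow> lift3 \<Rightarrow> bool" where
  "homogeneous_lift d F = (case F of (F1, F2, F3) \<Rightarrow>
     homogeneous3 d F1 \<and> homogeneous3 d F2 \<and> homogeneous3 d F3)"

definition reduced_lift :: "lift3 \<Rightarrow> bool" where
  "reduced_lift F = (case F of (F1, F2, F3) \<Rightarrow>
     (\<forall>h. h dvd F1 \<and> h dvd F2 \<and> h dvd F3 \<longrightarrow> is_unit h))"

definition same_map :: "lift3 \<Rightarrow> lift3 \<Rightarrow> bool" where
  "same_map G F = (nonzero_lift G \<and> nonzero_lift F \<and>
     (case G of (G1, G2, G3) \<Rightarrow> case F of (F1, F2, F3) \<Rightarrow>
        G1 * F2 = G2 * F1 \<and> G1 * F3 = G3 * F1 \<and> G2 * F3 = G3 * F2))"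

definition map_deg :: "lift3 \<Rightarrow> nat" where
  "map_deg F = (THE d. \<exists>G. same_map G F \<and> reduced_lift G \<and> homogeneous_lift d G)"

definition algebraically_stable :: "lift3 \<Rightarrow> bool" where
  "algebraically_stable F \<longleftrightarrow> (\<forall>n. map_deg (iter_lift F n) = map_deg F ^ n)"

definition R_lift :: lift3 where
  "R_lift = ((varU^2 + varV^2)^2, varV^2 * (varU + varW)^2, (varV^2 + varW^2)^2)"

end

theory Submission imports Defs "HOL-Computational_Algebra.Polynomial_Factorial" "HOL-Computational_Algebra.Field_as_Ring" "HOL-Computational_Algebra.Fundamental_Theorem_Algebra" begin

definition rhom :: "('a::comm_ring_1 \<Rightarrow> 'b::comm_ring_1) \<Rightarrow> bool" where
  "rhom f \<longleftrightarrow> f 0 = 0 \<and> f 1 = 1 \<and> (\<forall>x y. f (x + y) = f x + f y) \<and> (\<forall>x y. f (x * y) = f x * f y)"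

definition ev1 :: "('a::zero \<Rightarrow> 'b::comm_semiring_0) \<Rightarrow> 'a poly \<Rightarrow> 'b \<Rightarrow> 'b" where
  "ev1 f p x = poly (map_poly f p) x"

lemma map_poly_add_hom:
  assumes "rhom f" shows "map_poly f (p + q) = map_poly f p + map_poly f q"
  using assms by (intro poly_eqI) (simp add: coeff_map_poly rhom_def)

lemma map_poly_mult_hom:
  assumes "rhom f" shows "map_poly f (p * q) = map_poly f p * map_poly f q"
proof (induction p)
  case 0 then show ?case using assms by (simp add: rhom_def)
next
  case (pCons a p)
  have f0: "f 0 = 0" using assms by (simp add: rhom_def)
  have "map_poly f (pCons a p * q) = map_poly f (smult a q) + map_poly f (pCons 0 (p * q))"
    by (simp add: map_poly_add_hom[OF assms])
  also have "\<dots> = smult (f a) (map_poly f q) + pCons 0 (map_poly f p * map_poly f q)"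
    using assms pCons.IH by (simp add: map_poly_smult map_poly_pCons rhom_def)
  also have "\<dots> = map_poly f (pCons a p) * map_poly f q"
    by (simp add: map_poly_pCons f0)
  finally show ?case .
qed

lemma rhom_ev1:
  assumes "rhom f" shows "rhom (\<lambda>p. ev1 f p a)"
  using assms unfolding rhom_def ev1_def
  by (auto simp: map_poly_add_hom[OF assms] map_poly_mult_hom[OF assms] poly_add poly_mult
)

lemma ev1_nat:
  assumes "rhom \<phi>" "rhom f"
  shows "\<phi> (ev1 f p a) = ev1 (\<phi> \<circ> f) p (\<phi> a)"
proof (induction p)
  case 0 then show ?case using assms by (simp add: ev1_def rhom_def)
next
  case (pCons b p)
  have f0: "f 0 = 0" "\<phi> 0 = 0" using assms by (auto simp add: rhom_def)
  show ?case using pCons assms f0 unfolding ev1_def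
    by (simp add: map_poly_pCons rhom_def)
qed

definition ev3 where "ev3 f P a b c = ev1 (\<lambda>q. ev1 (\<lambda>r. ev1 f r a) q b) P c"

lemma rhom_ev3: "rhom f \<Longrightarrow> rhom (\<lambda>P. ev3 f P a b c)"
  unfolding ev3_def by (rule rhom_ev1, rule rhom_ev1, rule rhom_ev1, assumption)

lemma ev3_nat:
  assumes "rhom \<phi>" "rhom f"
  shows "\<phi> (ev3 f P a b c) = ev3 (\<phi> \<circ> f) P (\<phi> a) (\<phi> b) (\<phi> c)"
proof -
  have h1: "rhom (\<lambda>r. ev1 f r a)" using assms(2) by (rule rhom_ev1)
  have h2: "rhom (\<lambda>q. ev1 (\<lambda>r. ev1 f r a) q b)" using h1 by (rule rhom_ev1)
  have "\<phi> (ev3 f P a b c) = ev1 (\<phi> \<circ> (\<lambda>q. ev1 (\<lambda>r. ev1 f r a) q b)) P (\<phi> c)"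
    unfolding ev3_def by (rule ev1_nat[OF assms(1) h2])
  also have "(\<phi> \<circ> (\<lambda>q. ev1 (\<lambda>r. ev1 f r a) q b)) = (\<lambda>q. ev1 (\<lambda>r. ev1 (\<phi> \<circ> f) r (\<phi> a)) q (\<phi> b))"
  proof
    fix q
    have "\<phi> (ev1 (\<lambda>r. ev1 f r a) q b) = ev1 (\<phi> \<circ> (\<lambda>r. ev1 f r a)) q (\<phi> b)"
      by (rule ev1_nat[OF assms(1) h1])
    also have "(\<phi> \<circ> (\<lambda>r. ev1 f r a)) = (\<lambda>r. ev1 (\<phi> \<circ> f) r (\<phi> a))"
      using ev1_nat[OF assms] by (auto simp: fun_eq_iff)
    finally show "(\<phi> \<circ> (\<lambda>q. ev1 (\<lambda>r. ev1 f r a) q b)) q = ev1 (\<lambda>r. ev1 (\<phi> \<circ> f) r (\<phi> a)) q (\<phi> b)"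
      by simp
  qed
  finally show ?thesis unfolding ev3_def .
qed

lemma rhom_const3: "rhom const3"
  by (simp add: rhom_def const3_def one_pCons)

lemma rhom_id: "rhom (\<lambda>x. x)" by (simp add: rhom_def)
lemma rhom_pconst: "rhom (\<lambda>x. [:x:])" by (simp add: rhom_def)

lemma subst3_ev3: "subst3 P (A, B, C) = ev3 const3 P A B C"
  by (simp add: subst3_def ev3_def ev1_def)

lemma ev3_vars:
  assumes "rhom f"
  shows "ev3 f varU a b c = a" "ev3 f varV a b c = b" "ev3 f varW a b c = c" "ev3 f (const3 z) a b c = f z"
  using assms by (simp_all add: ev3_def ev1_def varU_def varV_def varW_def const3_def rhom_def map_poly_pCons)

lemma ev3_hom:
  assumes "rhom f"
  shows "ev3 f (P + Q) a b c = ev3 f P a b c + ev3 f Q a b c"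
    "ev3 f (P * Q) a b c = ev3 f P a b c * ev3 f Q a b c"
    "ev3 f (P ^ n) a b c = ev3 f P a b c ^ n"
    "ev3 f (P - Q) a b c = ev3 f P a b c - ev3 f Q a b c"
proof -
  have r: "rhom (\<lambda>P. ev3 f P a b c)" by (rule rhom_ev3[OF assms])
  then show "ev3 f (P + Q) a b c = ev3 f P a b c + ev3 f Q a b c"
    "ev3 f (P * Q) a b c = ev3 f P a b c * ev3 f Q a b c" by (auto simp: rhom_def)
  show "ev3 f (P ^ n) a b c = ev3 f P a b c ^ n"
    using r by (induction n) (auto simp: rhom_def)
  have "ev3 f (P - Q) a b c + ev3 f Q a b c = ev3 f P a b c"
    using r unfolding rhom_def by (metis diff_add_cancel)
  then show "ev3 f (P - Q) a b c = ev3 f P a b c - ev3 f Q a b c" by (simp add: algebra_simps)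
qed

lemma iter_step:
  "iter_lift R_lift (Suc n) = (case iter_lift R_lift n of (A, B, C) \<Rightarrow>
     ((A^2 + B^2)^2, B^2 * (A + C)^2, (B^2 + C^2)^2))"
proof -
  obtain A B C where e: "iter_lift R_lift n = (A, B, C)" by (cases "iter_lift R_lift n") auto
  show ?thesis unfolding iter_lift.simps e
    by (simp add: comp_lift_def R_lift_def subst3_ev3 ev3_hom[OF rhom_const3] ev3_vars[OF rhom_const3])
qed

definition E :: "poly3 \<Rightarrow> complex \<Rightarrow> complex \<Rightarrow> complex \<Rightarrow> complex" where
  "E P u v w = ev3 (\<lambda>x. x) P u v w"

lemma E_hom:
    "E (P + Q) a b c = E P a b c + E Q a b c"
    "E (P * Q) a b c = E P a b c * E Q a b c"
    "E (P ^ n) a b c = E P a b c ^ n"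
    "E (P - Q) a b c = E P a b c - E Q a b c"
  unfolding E_def by (rule ev3_hom[OF rhom_id])+

lemma E_vars: "E varU a b c = a" "E varV a b c = b" "E varW a b c = c" "E (const3 z) a b c = z"
  unfolding E_def by (rule ev3_vars[OF rhom_id])+

definition Er :: "poly3 \<Rightarrow> complex poly \<Rightarrow> complex poly \<Rightarrow> complex poly \<Rightarrow> complex poly" where
  "Er P a b c = ev3 (\<lambda>x. [:x:]) P a b c"

lemma rhom_poly_at: "rhom (\<lambda>p. poly p (t::complex))"
  by (simp add: rhom_def)

lemma poly_Er: "poly (Er P a b c) t = E P (poly a t) (poly b t) (poly c t)"
proof -
  have "poly (Er P a b c) t = ev3 ((\<lambda>p. poly p t) \<circ> (\<lambda>x. [:x:])) P (poly a t) (poly b t) (poly c t)"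
    unfolding Er_def by (rule ev3_nat[OF rhom_poly_at rhom_pconst])
  also have "(\<lambda>p. poly p t) \<circ> (\<lambda>x. [:x:]) = (\<lambda>x. x)" by (simp add: fun_eq_iff)
  finally show ?thesis by (simp add: E_def)
qed

lemma E_inj:
  assumes "\<And>u v w. E P u v w = 0" shows "P = 0"
proof -
  have r1: "\<And>u. rhom (\<lambda>r. ev1 (\<lambda>x::complex. x) r u)" by (rule rhom_ev1[OF rhom_id])
  have r2: "\<And>u v. rhom (\<lambda>q. ev1 (\<lambda>r. ev1 (\<lambda>x::complex. x) r u) q v)" by (rule rhom_ev1[OF r1])
  have A: "\<And>u v. map_poly (\<lambda>q. ev1 (\<lambda>r. ev1 (\<lambda>x::complex. x) r u) q v) P = 0"
    using assms unfolding E_def ev3_def ev1_def[of _ P] by (simp add: poly_all_0_iff_0[symmetric])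
  have B: "\<And>u v k. ev1 (\<lambda>r. ev1 (\<lambda>x::complex. x) r u) (coeff P k) v = 0"
  proof -
    fix u v k
    have "coeff (map_poly (\<lambda>q. ev1 (\<lambda>r. ev1 (\<lambda>x::complex. x) r u) q v) P) k = 0" using A by simp
    then show "ev1 (\<lambda>r. ev1 (\<lambda>x::complex. x) r u) (coeff P k) v = 0"
      using r2 by (simp add: coeff_map_poly rhom_def)
  qed
  have C: "\<And>u k j. ev1 (\<lambda>x::complex. x) (coeff (coeff P k) j) u = 0"
  proof -
    fix u k j
    have "map_poly (\<lambda>r. ev1 (\<lambda>x::complex. x) r u) (coeff P k) = 0"
      using B[of u k] unfolding ev1_def[of _ "coeff P k"] by (simp add: poly_all_0_iff_0[symmetric])
    then have "coeff (map_poly (\<lambda>r. ev1 (\<lambda>x::complex. x) r u) (coeff P k)) j = 0" by simp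
    then show "ev1 (\<lambda>x::complex. x) (coeff (coeff P k) j) u = 0"
      using r1 by (simp add: coeff_map_poly rhom_def)
  qed
  have "\<And>k j. coeff (coeff P k) j = 0"
    using C unfolding ev1_def by (simp add: poly_all_0_iff_0[symmetric])
  then show ?thesis by (intro poly_eqI) simp
qed

lemma U1:
  fixes p :: "complex poly"
  assumes "\<And>t. poly p t \<noteq> 0" shows "poly p a = poly p b"
proof -
  have "constant (poly p)" using fundamental_theorem_of_algebra assms by blast
  then show ?thesis by (simp add: constant_def)
qed

lemma U2:
  fixes p :: "complex poly"
  assumes "\<And>t. t \<noteq> 0 \<Longrightarrow> poly p t = c" shows "poly p 0 = c"
proof (rule ccontr)
  assume ne: "poly p 0 \<noteq> c"
  let ?q = "p - [:c:]"
  have "?q \<noteq> 0" using ne by auto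
  then have "finite {x. poly ?q x = 0}" by (rule poly_roots_finite)
  moreover have "UNIV - {0} \<subseteq> {x. poly ?q x = 0}" using assms by auto
  ultimately have "finite (UNIV - {0::complex})" by (rule finite_subset[rotated])
  then show False using infinite_UNIV_char_0[where 'a=complex] Diff_infinite_finite[of "{0::complex}" UNIV] by blast
qed

definition Et :: "lift3 \<Rightarrow> complex \<Rightarrow> complex \<Rightarrow> complex \<Rightarrow> complex \<times> complex \<times> complex" where
  "Et F u v w = (case F of (A, B, C) \<Rightarrow> (E A u v w, E B u v w, E C u v w))"

definition Rs :: "complex \<times> complex \<times> complex \<Rightarrow> complex \<times> complex \<times> complex" where
  "Rs x = (case x of (a, b, c) \<Rightarrow> ((a^2 + b^2)^2, b^2 * (a + c)^2, (b^2 + c^2)^2))"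

lemma Et_step: "Et (iter_lift R_lift (Suc n)) u v w = Rs (Et (iter_lift R_lift n) u v w)"
proof -
  obtain A B C where e: "iter_lift R_lift n = (A, B, C)" by (cases "iter_lift R_lift n") auto
  show ?thesis unfolding iter_step e by (simp add: Et_def Rs_def E_hom)
qed

lemma Et_plane: "Et (iter_lift R_lift n) u 0 w = (u^(4^n), 0, w^(4^n))"
proof (induction n)
  case 0 then show ?case by (simp add: Et_def E_vars)
next
  case (Suc n)
  show ?case unfolding Et_step Suc by (simp add: Rs_def power_mult[symmetric] mult.commute)
qed

lemma Et_scale: "Et (iter_lift R_lift n) (t*u) (t*v) (t*w) =
   (case Et (iter_lift R_lift n) u v w of (a, b, c) \<Rightarrow> (t^(4^n)*a, t^(4^n)*b, t^(4^n)*c))"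
proof (induction n)
  case 0 then show ?case by (simp add: Et_def E_vars)
next
  case (Suc n)
  obtain a b c where e: "Et (iter_lift R_lift n) u v w = (a, b, c)" by (cases "Et (iter_lift R_lift n) u v w") auto
  have p: "t ^ 4 ^ Suc n = (t ^ 4 ^ n) ^ 4" by (simp add: power_mult[symmetric] mult.commute)
  show ?case unfolding Et_step Suc e p by (simp add: Rs_def algebra_simps power2_eq_square power4_eq_xxxx)
qed

lemma const3_mult: "const3 a * const3 b = const3 (a * b)" by (simp add: const3_def)
lemma const3_one: "const3 1 = 1" by (simp add: const3_def one_pCons)

lemma reduced_iter: "reduced_lift (iter_lift R_lift n)"
proof -
  obtain F1 F2 F3 where e: "iter_lift R_lift n = (F1, F2, F3)" by (cases "iter_lift R_lift n") auto
  define N where "N = (4::nat)^n"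
  have N0: "N > 0" by (simp add: N_def)
  have pl1: "\<And>u w. E F1 u 0 w = u^N" and pl3: "\<And>u w. E F3 u 0 w = w^N"
    using Et_plane[of n] by (auto simp: e Et_def N_def)
  have sc: "\<And>t u v w. E F1 (t*u) (t*v) (t*w) = t^N * E F1 u v w"
    using Et_scale[of n] by (auto simp: e Et_def N_def)
  show ?thesis unfolding e reduced_lift_def
  proof (simp, intro allI impI)
    fix h assume dv: "h dvd F1 \<and> h dvd F2 \<and> h dvd F3"
    then obtain g1 g3 where f1: "F1 = h * g1" and f3: "F3 = h * g3" by (auto elim!: dvdE)
    have m1: "\<And>u v w. E F1 u v w = E h u v w * E g1 u v w" using f1 by (simp add: E_hom)
    have m3: "\<And>u v w. E F3 u v w = E h u v w * E g3 u v w" using f3 by (simp add: E_hom)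
    define c where "c = E h 0 0 1"
    have sa: "E h s 0 0 = c" if s0: "s \<noteq> 0" for s
    proof -
      let ?p = "Er h [:s, -s:] 0 [:0, 1:]"
      have pp: "\<And>t. poly ?p t = E h (s + t * - s) 0 t" by (simp add: poly_Er)
      have "poly ?p t \<noteq> 0" for t
      proof
        assume "poly ?p t = 0"
        then have z: "E h (s + t * - s) 0 t = 0" by (simp add: pp)
        have "(s + t * - s)^N = 0" using m1[of "s + t * - s" 0 t] z pl1 by simp
        then have a: "s + t * - s = 0" by simp
        have "t^N = 0" using m3[of "s + t * - s" 0 t] z pl3 by simp
        then have "t = 0" by simp
        with a s0 show False by simp
      qed
      then have "poly ?p 0 = poly ?p 1" by (rule U1)
      then show ?thesis by (simp add: pp c_def)
    qed
    have sb: "E h 0 0 0 = c"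
    proof -
      let ?p = "Er h [:0, 1:] 0 0"
      have pp: "\<And>t. poly ?p t = E h t 0 0" by (simp add: poly_Er)
      have "poly ?p 0 = c" by (rule U2) (simp add: pp sa)
      then show ?thesis by (simp add: pp)
    qed
    have c0: "c \<noteq> 0" using m3[of 0 0 1] pl3[of 0 1] by (auto simp: c_def)
    have sd: "E h u v w = c" if nz: "E F1 u v w \<noteq> 0" for u v w
    proof -
      let ?p = "Er h [:0, u:] [:0, v:] [:0, w:]"
      have pp: "\<And>t. poly ?p t = E h (t*u) (t*v) (t*w)" by (simp add: poly_Er)
      have "poly ?p t \<noteq> 0" for t
      proof
        assume "poly ?p t = 0"
        then have z: "E h (t*u) (t*v) (t*w) = 0" by (simp add: pp)
        have "t^N * E F1 u v w = 0" using m1[of "t*u" "t*v" "t*w"] z sc by simp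
        then have "t = 0" using nz by simp
        with z sb c0 show False by simp
      qed
      then have "poly ?p 1 = poly ?p 0" by (rule U1)
      then show ?thesis by (simp add: pp sb)
    qed
    have "(h - const3 c) * F1 = 0"
      by (rule E_inj) (auto simp: E_hom E_vars sd)
    moreover have "F1 \<noteq> 0" using pl1[of 1 0] by (auto simp: E_def ev3_def ev1_def)
    ultimately have hc: "h = const3 c" by simp
    have "h * const3 (1 / c) = 1" using c0 by (simp add: hc const3_mult const3_one)
    then show "is_unit h" by (metis dvdI)
  qed
qed

definition liftH :: "(nat \<Rightarrow> 'a::comm_semiring_1 \<Rightarrow> bool) \<Rightarrow> nat \<Rightarrow> 'a poly \<Rightarrow> bool" where
  "liftH H d p \<longleftrightarrow> (\<forall>k. if k \<le> d then H (d - k) (coeff p k) else coeff p k = 0)"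

definition goodH :: "(nat \<Rightarrow> 'a::comm_semiring_1 \<Rightarrow> bool) \<Rightarrow> bool" where
  "goodH H \<longleftrightarrow> (\<forall>d. H d 0) \<and> H 0 1 \<and> (\<forall>d x y. H d x \<longrightarrow> H d y \<longrightarrow> H d (x + y))
     \<and> (\<forall>a b x y. H a x \<longrightarrow> H b y \<longrightarrow> H (a + b) (x * y))"

lemma goodH_sum:
  assumes "goodH H" "finite A" "\<And>i. i \<in> A \<Longrightarrow> H d (f i)"
  shows "H d (sum f A)"
  using assms(2,3)
proof (induction A rule: finite_induct)
  case empty then show ?case using assms(1) by (simp add: goodH_def)
next
  case (insert x F) then show ?case using assms(1) by (simp add: goodH_def)
qed

lemma goodH_lift:
  assumes g: "goodH H" shows "goodH (liftH H)"
proof -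
  have H0: "\<And>d. H d 0" and H1: "H 0 1" and Ha: "\<And>d x y. H d x \<Longrightarrow> H d y \<Longrightarrow> H d (x + y)"
    and Hm: "\<And>a b x y. H a x \<Longrightarrow> H b y \<Longrightarrow> H (a + b) (x * y)"
    using g by (auto simp: goodH_def)
  have z: "liftH H d 0" for d by (simp add: liftH_def H0)
  have o: "liftH H 0 1" by (auto simp: liftH_def H1 coeff_1)
  have a: "liftH H d (p + q)" if "liftH H d p" "liftH H d q" for d p q
    using that by (auto simp: liftH_def Ha split: if_splits)
  have m: "liftH H (a + b) (p * q)" if hp: "liftH H a p" and hq: "liftH H b q" for a b p q
    unfolding liftH_def
  proof (intro allI)
    fix k
    have cp: "\<And>i. i > a \<Longrightarrow> coeff p i = 0" "\<And>i. i \<le> a \<Longrightarrow> H (a - i) (coeff p i)"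
      using hp unfolding liftH_def by (metis not_le)+
    have cq: "\<And>i. i > b \<Longrightarrow> coeff q i = 0" "\<And>i. i \<le> b \<Longrightarrow> H (b - i) (coeff q i)"
      using hq unfolding liftH_def by (metis not_le)+
    show "if k \<le> a + b then H (a + b - k) (coeff (p * q) k) else coeff (p * q) k = 0"
    proof (cases "k \<le> a + b")
      case True
      have "H (a + b - k) (\<Sum>i\<le>k. coeff p i * coeff q (k - i))"
      proof (rule goodH_sum[OF g], simp)
        fix i assume "i \<in> {..k}"
        then have ik: "i \<le> k" by simp
        show "H (a + b - k) (coeff p i * coeff q (k - i))"
        proof (cases "i \<le> a \<and> k - i \<le> b")
          case True
          then have "H ((a - i) + (b - (k - i))) (coeff p i * coeff q (k - i))"
            using cp(2) cq(2) Hm by blast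
          moreover have "(a - i) + (b - (k - i)) = a + b - k" using True ik by arith
          ultimately show ?thesis by simp
        next
          case False
          then have "coeff p i * coeff q (k - i) = 0" using cp(1) cq(1) by force
          then show ?thesis by (simp add: H0)
        qed
      qed
      then show ?thesis using True by (simp add: coeff_mult)
    next
      case False
      have "(\<Sum>i\<le>k. coeff p i * coeff q (k - i)) = 0"
      proof (rule sum.neutral, intro ballI)
        fix i assume "i \<in> {..k}"
        then have "i > a \<or> k - i > b" using False by auto
        then show "coeff p i * coeff q (k - i) = 0" using cp(1) cq(1) by force
      qed
      then show ?thesis using False by (simp add: coeff_mult)
    qed
  qed
  show ?thesis unfolding goodH_def using z o a m by blast
qed

lemma goodH_pow: "goodH H \<Longrightarrow> H d x \<Longrightarrow> H (n * d) (x ^ n)"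
  by (induction n) (auto simp: goodH_def)

lemma goodH_const: "goodH H \<Longrightarrow> H d x \<Longrightarrow> liftH H d [:x:]"
  by (auto simp: goodH_def liftH_def coeff_pCons split: nat.splits)

lemma goodH_X: "goodH H \<Longrightarrow> liftH H 1 [:0, 1:]"
  by (auto simp: goodH_def liftH_def coeff_pCons split: nat.splits)

definition H0 :: "nat \<Rightarrow> complex \<Rightarrow> bool" where "H0 d c \<longleftrightarrow> c = 0 \<or> d = 0"

lemma goodH0: "goodH H0" by (auto simp: goodH_def H0_def)

definition hom3 :: "nat \<Rightarrow> poly3 \<Rightarrow> bool" where "hom3 = liftH (liftH (liftH H0))"

lemma good1: "goodH (liftH H0)" by (rule goodH_lift[OF goodH0])
lemma good2: "goodH (liftH (liftH H0))" by (rule goodH_lift[OF good1])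
lemma good3: "goodH hom3" unfolding hom3_def by (rule goodH_lift[OF good2])

lemma hom3_vars: "hom3 1 varU" "hom3 1 varV" "hom3 1 varW"
proof -
  show "hom3 1 varU" unfolding hom3_def varU_def
    by (intro goodH_const good2 good1 goodH_X goodH0)
  show "hom3 1 varV" unfolding hom3_def varV_def
    by (intro goodH_const good2 goodH_X good1)
  show "hom3 1 varW" unfolding hom3_def varW_def
    by (intro goodH_X good2)
qed

lemma hom3_homogeneous: "hom3 d P \<Longrightarrow> homogeneous3 d P"
  unfolding homogeneous3_def coeff3_def hom3_def
proof (intro allI impI)
  fix i j k
  assume h: "liftH (liftH (liftH H0)) d P" and nz: "coeff (coeff (coeff P k) j) i \<noteq> 0"
  then have k: "k \<le> d" "liftH (liftH H0) (d - k) (coeff P k)"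
    unfolding liftH_def by (metis coeff_0 zero_poly.rep_eq)+
  then have j: "j \<le> d - k" "liftH H0 (d - k - j) (coeff (coeff P k) j)"
    using nz unfolding liftH_def by (metis coeff_0)+
  then have i: "i \<le> d - k - j" "H0 (d - k - j - i) (coeff (coeff (coeff P k) j) i)"
    using nz unfolding liftH_def by metis+
  then show "i + j + k = d" using nz k j by (simp add: H0_def)
qed

lemma hom3_iter: "hom3 (4^n) A \<and> hom3 (4^n) B \<and> hom3 (4^n) C" if "iter_lift R_lift n = (A, B, C)" for A B C
  using that
proof (induction n arbitrary: A B C)
  case 0 then show ?case using hom3_vars by auto
next
  case (Suc n)
  obtain A' B' C' where e: "iter_lift R_lift n = (A', B', C')" by (cases "iter_lift R_lift n") auto
  define N where "N = (4::nat)^n"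
  have h: "hom3 N A'" "hom3 N B'" "hom3 N C'" using Suc.IH[OF e] by (auto simp: N_def)
  have gm: "\<And>a b x y. hom3 a x \<Longrightarrow> hom3 b y \<Longrightarrow> hom3 (a + b) (x * y)"
   and ga: "\<And>d x y. hom3 d x \<Longrightarrow> hom3 d y \<Longrightarrow> hom3 d (x + y)"
    using good3 by (auto simp: goodH_def)
  have sq: "\<And>d x. hom3 d x \<Longrightarrow> hom3 (2 * d) (x^2)" using goodH_pow[OF good3] by blast
  have eq: "4 ^ Suc n = 2 * (2 * N)" "4 ^ Suc n = 2 * N + 2 * N" by (simp_all add: N_def)
  have "A = (A'^2 + B'^2)^2" "B = B'^2 * (A' + C')^2" "C = (B'^2 + C'^2)^2"
    using Suc.prems unfolding iter_step e by auto
  moreover have "hom3 (2 * (2 * N)) ((A'^2 + B'^2)^2)" using h by (intro sq ga)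
  moreover have "hom3 (2 * (2 * N)) ((B'^2 + C'^2)^2)" using h by (intro sq ga)
  moreover have "hom3 (2 * N + 2 * N) (B'^2 * (A' + C')^2)" using h by (intro sq ga gm)
  ultimately show ?case by (simp add: N_def)
qed

lemma unit3: assumes "is_unit (u::poly3)" shows "\<exists>\<gamma>. \<gamma> \<noteq> 0 \<and> u = const3 \<gamma>"
proof -
  obtain c2 where c2: "u = [:c2:]" "is_unit c2" using assms by (auto simp: is_unit_poly_iff)
  obtain c1 where c1: "c2 = [:c1:]" "is_unit c1" using c2(2) by (auto simp: is_unit_poly_iff)
  obtain c0 where c0: "c1 = [:c0:]" "is_unit c0" using c1(2) by (auto simp: is_unit_poly_iff)
  show ?thesis using c0 c1 c2 by (auto simp: const3_def)
qed

lemma coeff3_const_mult: "coeff3 (const3 \<gamma> * P) i j k = \<gamma> * coeff3 P i j k"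
  by (simp add: const3_def coeff3_def)

lemma ex_coeff3: assumes "P \<noteq> 0" shows "\<exists>i j k. coeff3 P i j k \<noteq> 0"
proof (rule ccontr)
  assume "\<not> ?thesis"
  then have "\<And>k j. coeff (coeff P k) j = 0" by (auto simp: coeff3_def intro: poly_eqI)
  then have "P = 0" by (intro poly_eqI) simp
  with assms show False by simp
qed

lemma deg_unique:
  assumes rF: "reduced_lift (F1, F2, F3)" and F1: "F1 \<noteq> 0" and hF: "homogeneous3 N F1"
    and sm: "same_map G (F1, F2, F3)" and rG: "reduced_lift G" and hG: "homogeneous_lift d G"
  shows "d = N"
proof -
  obtain G1 G2 G3 where eG: "G = (G1, G2, G3)" by (cases G) auto
  have e12: "G1 * F2 = G2 * F1" and e13: "G1 * F3 = G3 * F1"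
    using sm by (auto simp: same_map_def eG)
  have "gcd G1 F1 \<noteq> 0" using F1 by simp
  then obtain a b where ga: "G1 = a * gcd G1 F1" and gb: "F1 = b * gcd G1 F1" and cop: "coprime a b"
    using gcd_coprime_exists by blast
  define D where "D = gcd G1 F1"
  have D0: "D \<noteq> 0" using F1 by (simp add: D_def)
  have ga': "G1 = a * D" and gb': "F1 = b * D" using ga gb by (simp_all add: D_def)
  have key: "Gi * b = a * Fi" if "G1 * Fi = Gi * F1" for Gi Fi
  proof -
    have "(Gi * b) * D = Gi * F1" using gb' by (simp add: algebra_simps)
    also have "\<dots> = (a * Fi) * D" using that ga' by (simp add: algebra_simps)
    finally have "(Gi * b) * D = (a * Fi) * D" .
    then show ?thesis using D0 by simp
  qed
  have k1: "G1 * b = a * F1" by (rule key) simp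
  have k2: "G2 * b = a * F2" by (rule key) (simp add: e12)
  have k3: "G3 * b = a * F3" by (rule key) (simp add: e13)
  have cop': "coprime b a" using cop by (simp add: ac_simps)
  have "b dvd F1" "b dvd F2" "b dvd F3"
    using k1 k2 k3 cop' by (metis coprime_dvd_mult_right_iff dvd_triv_right)+
  then have ub: "is_unit b" using rF by (auto simp: reduced_lift_def)
  have "a dvd G1" "a dvd G2" "a dvd G3"
    using k1 k2 k3 cop by (metis coprime_dvd_mult_right_iff dvd_triv_right mult.commute)+
  then have ua: "is_unit a" using rG by (auto simp: reduced_lift_def eG)
  obtain b' where bb: "1 = b * b'" using ub by (auto elim!: dvdE)
  have "is_unit (a * b')" using ua bb by (metis dvd_triv_right is_unit_mult_iff)
  then obtain \<gamma> where g0: "\<gamma> \<noteq> 0" and gu: "a * b' = const3 \<gamma>" using unit3 by blast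
  have "G1 = G1 * b * b'" using bb by (simp add: mult.assoc[symmetric] mult.assoc)
  also have "\<dots> = const3 \<gamma> * F1" using k1 gu by (simp add: algebra_simps)
  finally have G1e: "G1 = const3 \<gamma> * F1" .
  obtain i j k where nz: "coeff3 F1 i j k \<noteq> 0" using ex_coeff3[OF F1] by blast
  have "coeff3 G1 i j k \<noteq> 0" using nz g0 by (simp add: G1e coeff3_const_mult)
  then have "i + j + k = d" using hG by (auto simp: homogeneous_lift_def eG homogeneous3_def)
  moreover have "i + j + k = N" using nz hF by (auto simp: homogeneous3_def)
  ultimately show ?thesis by simp
qed

lemma F1_nonzero: assumes "iter_lift R_lift n = (F1, F2, F3)" shows "F1 \<noteq> 0"
proof
  assume "F1 = 0"
  moreover have "E F1 1 0 0 = 1" using Et_plane[of n 1 0] assms by (simp add: Et_def)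
  ultimately show False by (simp add: E_def ev3_def ev1_def)
qed

lemma map_deg_iter: "map_deg (iter_lift R_lift n) = 4^n"
proof -
  obtain F1 F2 F3 where e: "iter_lift R_lift n = (F1, F2, F3)" by (cases "iter_lift R_lift n") auto
  have F1: "F1 \<noteq> 0" by (rule F1_nonzero[OF e])
  have r: "reduced_lift (F1, F2, F3)" using reduced_iter[of n] e by simp
  have h: "hom3 (4^n) F1 \<and> hom3 (4^n) F2 \<and> hom3 (4^n) F3" by (rule hom3_iter[OF e])
  have hl: "homogeneous_lift (4^n) (F1, F2, F3)" using h by (simp add: homogeneous_lift_def hom3_homogeneous)
  have sm: "same_map (F1, F2, F3) (F1, F2, F3)" using F1 by (simp add: same_map_def nonzero_lift_def mult.commute)
  show ?thesis unfolding map_deg_def e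
  proof (rule the_equality)
    show "\<exists>G. same_map G (F1, F2, F3) \<and> reduced_lift G \<and> homogeneous_lift (4 ^ n) G"
      using sm r hl by blast
  next
    fix d assume "\<exists>G. same_map G (F1, F2, F3) \<and> reduced_lift G \<and> homogeneous_lift d G"
    then obtain G where "same_map G (F1, F2, F3)" "reduced_lift G" "homogeneous_lift d G" by blast
    then show "d = 4^n" using deg_unique[OF r F1] hl by (auto simp: homogeneous_lift_def)
  qed
qed

theorem proposition4p4:
  shows "algebraically_stable R_lift"
proof -
  have "iter_lift R_lift 1 = R_lift" using iter_step[of 0] by (simp add: R_lift_def)
  then have "map_deg R_lift = 4" using map_deg_iter[of 1] by simp
  then show ?thesis unfolding algebraically_stable_def by (simp add: map_deg_iter)
qed

end
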